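(* Let $(\mathbf X_1,\mathbf Y_1)$, $(\mathbf X_2,\mathbf Y_2)$ be general correlated sources and $(\mathbf X,\mathbf Y)$ the mixture $P_{X^nY^n}=\alpha_1P_{X_1^nY_1^n}+\alpha_2P_{X_2^nY_2^n}$ with $\alpha_1,\alpha_2>0$, $\alpha_1+\alpha_2=1$. If for both $i=1,2$ the sequence $\{\frac1n\log\frac1{P_{X_i^n|Y_i^n}(X_i^n|Y_i^n)}\}_{n\ge1}$ satisfies Condition (W), then $\{\frac1n\log\frac1{P_{X^n|Y^n}(X^n|Y^n)}\}_{n\ge1}$ also satisfies Condition (W).
   Context: A general correlated source $\{(X^n,Y^n)\}_{n\ge1}$ is an arbitrary sequence of pairs of random variables on $\mathcal X^n\times\mathcal Y^n$, $\mathcal X,\mathcal Y$ finite or countably infinite (no structural assumptions; marginal probabilities positive). Logs base 2. A sequence $\{Z_n\}$ of discrete real random variables ($Z_n$ taking values in a countable set $\mathcal Z_n$) satisfies Condition (W) if: (i) there is $M<\infty$ with $\mathbb E[Z_n]<M$ for all $n$; and (ii) whenever subsets $\mathcal A_n\subseteq\mathcal Z_n$ satisfy $P_{Z_n}(\mathcal A_n)\to0$, then $\lim_n\sum_{z\in\mathcal A_n}P_{Z_n}(z)|z|=0$. *)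

theory Defs
  imports "HOL-Probability.Probability"
begin

definition correlated_source :: "(nat \<Rightarrow> ('x list \<times> 'y list) pmf) \<Rightarrow> bool" where
  "correlated_source P \<longleftrightarrow>
     (\<forall>n. set_pmf (P n) \<subseteq> {(x, y). length x = n \<and> length y = n})"

definition cond_prob :: "('a \<times> 'b) pmf \<Rightarrow> 'a \<Rightarrow> 'b \<Rightarrow> real" where
  "cond_prob P x y = pmf P (x, y) / pmf (map_pmf snd P) y"

definition cond_info_density :: "nat \<Rightarrow> ('a \<times> 'b) pmf \<Rightarrow> real pmf" where
  "cond_info_density n P =
     map_pmf (\<lambda>(x, y). (1 / real n) * log 2 (1 / cond_prob P x y)) P"

text \<open>Condition (W) for a sequence of discrete real random variables, given by their
  distributions Q n (n \<ge> 1); the countable value set Z_n is the support of Q n.\<close>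
definition condition_W :: "(nat \<Rightarrow> real pmf) \<Rightarrow> bool" where
  "condition_W Q \<longleftrightarrow>
     (\<exists>M. \<forall>n\<ge>1. integrable (measure_pmf (Q n)) (\<lambda>z. z) \<and>
                 measure_pmf.expectation (Q n) (\<lambda>z. z) < M) \<and>
     (\<forall>A :: nat \<Rightarrow> real set.
        (\<forall>n. A n \<subseteq> set_pmf (Q n)) \<longrightarrow>
        (\<lambda>n. measure_pmf.prob (Q n) (A n)) \<longlonglongrightarrow> 0 \<longrightarrow>
        (\<lambda>n. \<integral>\<^sup>+ z \<in> A n. ennreal \<bar>z\<bar> \<partial>measure_pmf (Q n)) \<longlonglongrightarrow> 0)"

end

theory Submission imports Defs
begin

lemma mix_nn:
  fixes P P1 P2 :: "'a pmf"
  assumes "\<And>z. pmf P z = a1 * pmf P1 z + a2 * pmf P2 z" "a1 \<ge> 0" "a2 \<ge> 0"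
  shows "(\<integral>\<^sup>+x. f x \<partial>P) = ennreal a1 * (\<integral>\<^sup>+x. f x \<partial>P1) + ennreal a2 * (\<integral>\<^sup>+x. f x \<partial>P2)"
proof -
  have "(\<integral>\<^sup>+x. f x \<partial>P) = \<integral>\<^sup>+ x. ennreal a1 * (ennreal (pmf P1 x) * f x) + ennreal a2 * (ennreal (pmf P2 x) * f x) \<partial>count_space UNIV"
    unfolding nn_integral_measure_pmf
    by (intro nn_integral_cong) (simp add: assms ennreal_plus ennreal_mult distrib_right mult.assoc)
  also have "\<dots> = ennreal a1 * (\<integral>\<^sup>+x. f x \<partial>P1) + ennreal a2 * (\<integral>\<^sup>+x. f x \<partial>P2)"
    unfolding nn_integral_measure_pmf
    by (simp add: nn_integral_add nn_integral_cmult)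
  finally show ?thesis .
qed

lemma mix_measure:
  fixes P P1 P2 :: "'a pmf"
  assumes "\<And>z. pmf P z = a1 * pmf P1 z + a2 * pmf P2 z" "a1 \<ge> 0" "a2 \<ge> 0"
  shows "measure P S = a1 * measure P1 S + a2 * measure P2 S"
proof -
  have "ennreal (measure P S) = ennreal a1 * ennreal (measure P1 S) + ennreal a2 * ennreal (measure P2 S)"
    using mix_nn[OF assms, of "indicator S"]
    by (simp add: measure_pmf.emeasure_eq_measure[symmetric])
  also have "\<dots> = ennreal (a1 * measure P1 S + a2 * measure P2 S)"
    using assms by (simp add: ennreal_plus ennreal_mult)
  finally have eq: "ennreal (measure P S) = ennreal (a1 * measure P1 S + a2 * measure P2 S)" .
  show ?thesis using eq ennreal_inj[of "measure P S" "a1 * measure P1 S + a2 * measure P2 S"] assms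
    by auto
qed

lemma ln2_half: "1/2 \<le> ln (2::real)"
proof -
  have "exp (1/2::real) * exp (1/2) = exp 1"
  proof -
    have "exp (1/2::real) * exp (1/2) = exp (1/2 + 1/2)" by (rule exp_add[symmetric])
    thus ?thesis by simp
  qed
  also have "\<dots> \<le> 3" by (rule exp_le)
  finally have le3: "exp (1/2::real) * exp (1/2) \<le> 3" .
  have "exp (1/2::real) \<le> 2"
  proof (rule ccontr)
    assume "\<not> exp (1/2::real) \<le> 2"
    hence g: "2 < exp (1/2::real)" by simp
    have "(2::real) * 2 < exp (1/2::real) * exp (1/2)"
      using g by (intro mult_strict_mono) auto
    thus False using le3 by linarith
  qed
  hence "ln (exp (1/2::real)) \<le> ln 2" by (subst ln_le_cancel_iff) auto
  thus ?thesis by simp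
qed

lemma log_sqrt: "r > 0 \<Longrightarrow> log 2 r \<le> 4 * sqrt r"
proof -
  assume r: "r > 0"
  have "ln (sqrt r) \<le> sqrt r - 1" using r by (intro ln_le_minus_one) auto
  hence "ln r \<le> 2 * sqrt r" using r by (simp add: ln_sqrt)
  have l2: "1/2 \<le> ln (2::real)" by (rule ln2_half)
  have lr: "ln r \<le> 2 * sqrt r" by fact
  show ?thesis
  proof (cases "ln r \<le> 0")
    case True
    have "ln r / ln 2 \<le> 0" using True l2 by (intro divide_nonpos_pos) auto
    moreover have "0 \<le> sqrt r" using r by simp
    ultimately show ?thesis unfolding log_def by linarith
  next
    case False
    have "ln r / ln 2 \<le> ln r / (1/2)"
      using False l2 by (intro divide_left_mono) auto
    also have "ln r / (1/2) = 2 * ln r" by simp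
    finally show ?thesis unfolding log_def using lr by linarith
  qed
qed

lemma sqrt_amgm: "K > 0 \<Longrightarrow> R \<ge> 0 \<Longrightarrow> sqrt R \<le> K + R / K"
proof -
  assume K: "K > 0" and R: "R \<ge> 0"
  show ?thesis
  proof (cases "sqrt R \<le> K")
    case True thus ?thesis using K R divide_nonneg_pos[of R K] by linarith
  next
    case False
    hence "sqrt R * K \<le> sqrt R * sqrt R" using K R by (intro mult_left_mono) auto
    hence "sqrt R * K \<le> R" using R by simp
    hence "sqrt R \<le> R / K" using K by (simp add: le_divide_eq)
    thus ?thesis using K by linarith
  qed
qed


lemma ennreal_plus3: "0 \<le> (x::real) \<Longrightarrow> 0 \<le> y \<Longrightarrow> 0 \<le> z \<Longrightarrow>
   ennreal (x + y + z) = ennreal x + ennreal y + ennreal z"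
  by (simp add: ennreal_plus)

lemma W_bound:
  fixes Pc :: "nat \<Rightarrow> 'a pmf" and Zc :: "nat \<Rightarrow> 'a \<Rightarrow> real"
  assumes W: "condition_W (\<lambda>n. map_pmf (Zc n) (Pc n))"
    and Zpos: "\<And>n w. w \<in> set_pmf (Pc n) \<Longrightarrow> 0 \<le> Zc n w"
  shows "\<exists>M\<ge>0. \<forall>n\<ge>1. (\<integral>\<^sup>+w. ennreal (Zc n w) \<partial>Pc n) \<le> ennreal M"
proof -
  from W obtain M where M: "\<forall>n\<ge>1. integrable (measure_pmf (map_pmf (Zc n) (Pc n))) (\<lambda>z. z) \<and>
                 measure_pmf.expectation (map_pmf (Zc n) (Pc n)) (\<lambda>z. z) < M"
    unfolding condition_W_def by blast
  have "\<forall>n\<ge>1. (\<integral>\<^sup>+w. ennreal (Zc n w) \<partial>Pc n) \<le> ennreal (max M 0)"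
  proof (intro allI impI)
    fix n :: nat assume n: "n \<ge> 1"
    have int: "integrable (Pc n) (Zc n)" using M n by simp
    have "(\<integral>\<^sup>+w. ennreal (Zc n w) \<partial>Pc n) = ennreal (integral\<^sup>L (Pc n) (Zc n))"
      using int Zpos by (intro nn_integral_eq_integral) (auto intro!: AE_pmfI)
    also have "integral\<^sup>L (Pc n) (Zc n) < M" using M n by simp
    hence "ennreal (integral\<^sup>L (Pc n) (Zc n)) \<le> ennreal (max M 0)"
      by (intro ennreal_leI) simp
    finally show "(\<integral>\<^sup>+w. ennreal (Zc n w) \<partial>Pc n) \<le> ennreal (max M 0)" .
  qed
  thus ?thesis by (intro exI[of _ "max M 0"]) simp
qed

lemma comp_bound:
  fixes Pc :: "nat \<Rightarrow> 'a pmf" and Zc F R :: "nat \<Rightarrow> 'a \<Rightarrow> real"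
  assumes W: "condition_W (\<lambda>n. map_pmf (Zc n) (Pc n))"
    and Zpos: "\<And>n w. w \<in> set_pmf (Pc n) \<Longrightarrow> 0 \<le> Zc n w"
    and Fb: "\<And>n w. w \<in> set_pmf (Pc n) \<Longrightarrow> F n w \<le> c + Zc n w + 4 * sqrt (R n w)"
    and Rpos: "\<And>n w. 0 \<le> R n w"
    and Rint: "\<And>n. (\<integral>\<^sup>+w. ennreal (R n w) \<partial>Pc n) \<le> 1"
    and c: "0 \<le> c"
  shows "\<exists>M. \<forall>n\<ge>1. (\<integral>\<^sup>+w. ennreal (F n w) \<partial>Pc n) \<le> ennreal M"
proof -
  obtain M1 where M1: "M1 \<ge> 0" "\<forall>n\<ge>1. (\<integral>\<^sup>+w. ennreal (Zc n w) \<partial>Pc n) \<le> ennreal M1"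
    using W_bound[OF W Zpos] by blast
  have "\<forall>n\<ge>1. (\<integral>\<^sup>+w. ennreal (F n w) \<partial>Pc n) \<le> ennreal (c + 4 + M1 + 4)"
  proof (intro allI impI)
    fix n :: nat assume n: "n \<ge> 1"
    have "(\<integral>\<^sup>+w. ennreal (F n w) \<partial>Pc n) \<le>
        (\<integral>\<^sup>+w. ennreal (c + 4) + ennreal (Zc n w) + ennreal 4 * ennreal (R n w) \<partial>Pc n)"
    proof (intro nn_integral_mono_AE AE_pmfI)
      fix w assume w: "w \<in> set_pmf (Pc n)"
      have "sqrt (R n w) \<le> 1 + R n w / 1" using Rpos by (intro sqrt_amgm) auto
      hence "F n w \<le> (c + 4) + Zc n w + 4 * R n w" using Fb[OF w] by simp
      hence "ennreal (F n w) \<le> ennreal ((c + 4) + Zc n w + 4 * R n w)" by (rule ennreal_leI)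
      also have "\<dots> = ennreal (c + 4) + ennreal (Zc n w) + ennreal 4 * ennreal (R n w)"
        using c Zpos[OF w] Rpos by (simp add: ennreal_plus ennreal_mult)
      finally show "ennreal (F n w) \<le> ennreal (c + 4) + ennreal (Zc n w) + ennreal 4 * ennreal (R n w)" .
    qed
    also have "\<dots> = ennreal (c + 4) + (\<integral>\<^sup>+w. ennreal (Zc n w) \<partial>Pc n) + ennreal 4 * (\<integral>\<^sup>+w. ennreal (R n w) \<partial>Pc n)"
      by (simp add: nn_integral_add nn_integral_cmult measure_pmf.emeasure_space_1)
    also have "\<dots> \<le> ennreal (c + 4) + ennreal M1 + ennreal 4 * 1"
      using M1 n Rint by (intro add_mono mult_left_mono) auto
    also have "\<dots> = ennreal (c + 4 + M1 + 4)"
      using c M1 by (simp add: ennreal_plus)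
    finally show "(\<integral>\<^sup>+w. ennreal (F n w) \<partial>Pc n) \<le> ennreal (c + 4 + M1 + 4)" .
  qed
  thus ?thesis by blast
qed


lemma comp_ui:
  fixes Pc :: "nat \<Rightarrow> 'a pmf" and Zc F R :: "nat \<Rightarrow> 'a \<Rightarrow> real" and E :: "nat \<Rightarrow> 'a set"
  assumes W: "condition_W (\<lambda>n. map_pmf (Zc n) (Pc n))"
    and Zpos: "\<And>n w. w \<in> set_pmf (Pc n) \<Longrightarrow> 0 \<le> Zc n w"
    and Fb: "\<And>n w. w \<in> set_pmf (Pc n) \<Longrightarrow> F n w \<le> c + Zc n w + 4 * sqrt (R n w)"
    and Rpos: "\<And>n w. 0 \<le> R n w"
    and Rint: "\<And>n. (\<integral>\<^sup>+w. ennreal (R n w) \<partial>Pc n) \<le> 1"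
    and c: "0 \<le> c"
    and pE: "(\<lambda>n. measure (Pc n) (E n)) \<longlonglongrightarrow> 0"
  shows "(\<lambda>n. \<integral>\<^sup>+w. ennreal (F n w) * indicator (E n) w \<partial>Pc n) \<longlonglongrightarrow> 0"
proof -
  obtain M1 where M1: "M1 \<ge> 0" "\<forall>n\<ge>1. (\<integral>\<^sup>+w. ennreal (Zc n w) \<partial>Pc n) \<le> ennreal M1"
    using W_bound[OF W Zpos] by blast
  define p where "p n = measure (Pc n) (E n)" for n
  define q where "q n = p n + inverse (real (Suc n))" for n
  define K where "K n = 1 / sqrt (q n)" for n
  have p0: "p n \<ge> 0" for n unfolding p_def by simp
  have qpos: "q n > 0" for n unfolding q_def using p0[of n] by (simp add: add_nonneg_pos)
  have Kpos: "K n > 0" for n unfolding K_def using qpos[of n] by simp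
  have Ksq: "1 / K n = sqrt (q n)" for n unfolding K_def by simp
  have Kp: "K n * p n \<le> sqrt (q n)" for n
  proof -
    have pq: "p n \<le> q n" unfolding q_def by simp
    have "K n * p n \<le> K n * q n" using Kpos[of n] pq by (intro mult_left_mono) auto
    also have "K n * q n = q n / sqrt (q n)" unfolding K_def by simp
    also have "\<dots> = sqrt (q n)" using qpos[of n] by (intro real_div_sqrt) simp
    finally show ?thesis .
  qed
  have q0: "q \<longlonglongrightarrow> 0"
    unfolding q_def using tendsto_add[OF pE[folded p_def] LIMSEQ_inverse_real_of_nat] by simp
  have sq0: "(\<lambda>n. sqrt (q n)) \<longlonglongrightarrow> 0"
    using tendsto_real_sqrt[OF q0] by simp
  define Q where "Q n = map_pmf (Zc n) (Pc n)" for n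
  define B where "B n = {z \<in> set_pmf (Q n). K n < z}" for n
  have QB: "measure (Q n) (B n) \<le> M1 * sqrt (q n)" if n: "n \<ge> 1" for n
  proof -
    have "ennreal (K n) * emeasure (Q n) (B n) = (\<integral>\<^sup>+ z. ennreal (K n) * indicator (B n) z \<partial>Q n)"
      by (simp add: nn_integral_cmult_indicator)
    also have "\<dots> \<le> (\<integral>\<^sup>+ z. ennreal z \<partial>Q n)"
      by (intro nn_integral_mono) (auto simp: B_def split: split_indicator intro!: ennreal_leI)
    also have "\<dots> = (\<integral>\<^sup>+w. ennreal (Zc n w) \<partial>Pc n)" unfolding Q_def by simp
    also have "\<dots> \<le> ennreal M1" using M1 n by auto
    finally have "ennreal (K n * measure (Q n) (B n)) \<le> ennreal M1"
      using Kpos[of n] by (simp add: measure_pmf.emeasure_eq_measure ennreal_mult)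
    hence "K n * measure (Q n) (B n) \<le> M1" using M1 by (simp add: ennreal_le_iff)
    hence "measure (Q n) (B n) \<le> M1 / K n" using Kpos[of n] by (simp add: le_divide_eq mult.commute)
    also have "M1 / K n = M1 * sqrt (q n)" using Ksq[of n] by (metis times_divide_eq_right mult_1_right)
    finally show ?thesis .
  qed
  have QB0: "(\<lambda>n. measure (Q n) (B n)) \<longlonglongrightarrow> 0"
  proof (rule tendsto_sandwich[of "\<lambda>_. 0" _ _ "\<lambda>n. M1 * sqrt (q n)"])
    show "\<forall>\<^sub>F n in sequentially. 0 \<le> measure (Q n) (B n)" by simp
    show "\<forall>\<^sub>F n in sequentially. measure (Q n) (B n) \<le> M1 * sqrt (q n)"
      using eventually_ge_at_top[of 1] by eventually_elim (rule QB)
    show "(\<lambda>n. M1 * sqrt (q n)) \<longlonglongrightarrow> 0" using tendsto_mult_right_zero[OF sq0] by simp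
  qed simp
  define T where "T n = (\<integral>\<^sup>+ z \<in> B n. ennreal \<bar>z\<bar> \<partial>Q n)" for n
  have T0: "T \<longlonglongrightarrow> 0"
    using W QB0 unfolding condition_W_def T_def Q_def B_def by auto
  have T_eq: "T n = (\<integral>\<^sup>+w. ennreal (Zc n w * indicator {z. K n < z} (Zc n w)) \<partial>Pc n)" for n
    unfolding T_def Q_def B_def nn_integral_map_pmf
    by (intro nn_integral_cong_AE AE_pmfI) (auto simp: Zpos split: split_indicator)
  have main: "(\<integral>\<^sup>+w. ennreal (F n w) * indicator (E n) w \<partial>Pc n) \<le>
       ennreal ((c + 5 * K n) * p n + 4 / K n) + T n" for n
  proof -
    have "(\<integral>\<^sup>+w. ennreal (F n w) * indicator (E n) w \<partial>Pc n) \<le>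
       (\<integral>\<^sup>+w. ennreal (c + 5 * K n) * indicator (E n) w
            + ennreal (Zc n w * indicator {z. K n < z} (Zc n w))
            + ennreal (4 / K n) * ennreal (R n w) \<partial>Pc n)"
    proof (intro nn_integral_mono_AE AE_pmfI)
      fix w assume w: "w \<in> set_pmf (Pc n)"
      have Z0: "0 \<le> Zc n w" using Zpos[OF w] .
      have K0: "0 < K n" by (rule Kpos)
      have t1: "0 \<le> Zc n w * indicator {z. K n < z} (Zc n w)" using Z0 by (simp split: split_indicator)
      have t2: "0 \<le> 4 / K n * R n w" using K0 Rpos[of n w] by simp
      show "ennreal (F n w) * indicator (E n) w \<le> ennreal (c + 5 * K n) * indicator (E n) w
            + ennreal (Zc n w * indicator {z. K n < z} (Zc n w))
            + ennreal (4 / K n) * ennreal (R n w)"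
      proof (cases "w \<in> E n")
        case False thus ?thesis by simp
      next
        case True
        have zk: "Zc n w \<le> K n + Zc n w * indicator {z. K n < z} (Zc n w)"
          using K0 Z0 by (auto split: split_indicator)
        have sk: "sqrt (R n w) \<le> K n + R n w / K n" using K0 Rpos[of n w] by (rule sqrt_amgm)
        have "F n w \<le> (c + 5 * K n) + Zc n w * indicator {z. K n < z} (Zc n w) + 4 / K n * R n w"
        proof -
          have e: "4 * (R n w / K n) = 4 / K n * R n w" by simp
          show ?thesis using Fb[OF w] zk sk e by linarith
        qed
        hence "ennreal (F n w) \<le> ennreal ((c + 5 * K n) + Zc n w * indicator {z. K n < z} (Zc n w) + 4 / K n * R n w)"
          by (rule ennreal_leI)
        also have "\<dots> = ennreal (c + 5 * K n) + ennreal (Zc n w * indicator {z. K n < z} (Zc n w)) + ennreal (4 / K n) * ennreal (R n w)"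
        proof -
          have m: "ennreal (4 / K n * R n w) = ennreal (4 / K n) * ennreal (R n w)"
            using K0 Rpos[of n w] by (intro ennreal_mult) auto
          show ?thesis unfolding m[symmetric] using t1 t2 c K0
            by (intro ennreal_plus3) auto
        qed
        finally show ?thesis using True by simp
      qed
    qed
    also have "\<dots> = ennreal (c + 5 * K n) * emeasure (Pc n) (E n) + T n + ennreal (4 / K n) * (\<integral>\<^sup>+w. ennreal (R n w) \<partial>Pc n)"
      unfolding T_eq by (simp add: nn_integral_add nn_integral_cmult nn_integral_cmult_indicator)
    also have "\<dots> \<le> ennreal (c + 5 * K n) * ennreal (p n) + T n + ennreal (4 / K n) * 1"
      unfolding p_def measure_pmf.emeasure_eq_measure using Rint by (intro add_mono mult_left_mono) auto
    also have "\<dots> = ennreal ((c + 5 * K n) * p n + 4 / K n) + T n"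
      using c Kpos[of n] p0[of n] by (simp add: ennreal_plus ennreal_mult add_ac)
    finally show ?thesis .
  qed
  have real0: "(\<lambda>n. (c + 5 * K n) * p n + 4 / K n) \<longlonglongrightarrow> 0"
  proof (rule tendsto_sandwich[of "\<lambda>_. 0" _ _ "\<lambda>n. c * p n + 9 * sqrt (q n)"])
    show "\<forall>\<^sub>F n in sequentially. 0 \<le> (c + 5 * K n) * p n + 4 / K n"
    proof (intro always_eventually allI)
      fix n
      have "0 \<le> (c + 5 * K n) * p n" using c Kpos[of n] p0[of n] by (intro mult_nonneg_nonneg) auto
      moreover have "0 \<le> 4 / K n" using Kpos[of n] by simp
      ultimately show "0 \<le> (c + 5 * K n) * p n + 4 / K n" by linarith
    qed
    show "\<forall>\<^sub>F n in sequentially. (c + 5 * K n) * p n + 4 / K n \<le> c * p n + 9 * sqrt (q n)"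
    proof (intro always_eventually allI)
      fix n
      have "4 / K n = 4 * sqrt (q n)" using Ksq[of n] by (metis times_divide_eq_right mult_1_right)
      thus "(c + 5 * K n) * p n + 4 / K n \<le> c * p n + 9 * sqrt (q n)"
        using Kp[of n] by (simp add: algebra_simps)
    qed
    have "(\<lambda>n. c * p n + 9 * sqrt (q n)) \<longlonglongrightarrow> c * 0 + 9 * 0"
      using pE[folded p_def] sq0 by (intro tendsto_intros)
    thus "(\<lambda>n. c * p n + 9 * sqrt (q n)) \<longlonglongrightarrow> 0" by simp
  qed simp
  have up0: "(\<lambda>n. ennreal ((c + 5 * K n) * p n + 4 / K n) + T n) \<longlonglongrightarrow> 0"
  proof -
    have "(\<lambda>n. ennreal ((c + 5 * K n) * p n + 4 / K n) + T n) \<longlonglongrightarrow> ennreal 0 + 0"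
      using real0 T0 by (intro tendsto_add tendsto_ennrealI)
    thus ?thesis by simp
  qed
  show ?thesis
    by (rule tendsto_sandwich[of "\<lambda>_. 0" _ _ "\<lambda>n. ennreal ((c + 5 * K n) * p n + 4 / K n) + T n"])
       (use main up0 in auto)
qed


definition Zf :: "nat \<Rightarrow> ('a \<times> 'b) pmf \<Rightarrow> 'a \<times> 'b \<Rightarrow> real" where
  "Zf n p = (\<lambda>(x, y). (1 / real n) * log 2 (1 / cond_prob p x y))"

lemma cid_eq: "cond_info_density n p = map_pmf (Zf n p) p"
  by (simp add: cond_info_density_def Zf_def)

lemma pmf_le_marg: "pmf p (x, y) \<le> pmf (map_pmf snd p) y"
proof -
  have "pmf p (x, y) = measure p {(x, y)}" by (simp add: measure_pmf_single)
  also have "\<dots> \<le> measure p (snd -` {y})" by (intro measure_pmf.finite_measure_mono) auto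
  also have "\<dots> = pmf (map_pmf snd p) y" by (simp add: pmf_map)
  finally show ?thesis .
qed

lemma Zf_nonneg:
  assumes "(x, y) \<in> set_pmf p"
  shows "0 \<le> Zf n p (x, y)"
proof -
  have p0: "0 < pmf p (x, y)" using assms by (rule pmf_positive)
  have le: "pmf p (x, y) \<le> pmf (map_pmf snd p) y" by (rule pmf_le_marg)
  have "1 \<le> 1 / cond_prob p x y" unfolding cond_prob_def using p0 le by simp
  moreover have "0 < cond_prob p x y" unfolding cond_prob_def using p0 le by simp
  ultimately have "0 \<le> log 2 (1 / cond_prob p x y)" by (intro iffD2[OF zero_le_log_cancel_iff]) auto
  thus ?thesis unfolding Zf_def by simp
qed

lemma tmax: "0 \<le> (t::real) \<Longrightarrow> t \<le> 1 \<Longrightarrow> t * L \<le> max 0 L"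
proof (cases "L \<ge> 0")
  case True
  assume "0 \<le> t" "t \<le> 1"
  hence "t * L \<le> 1 * L" using True by (intro mult_right_mono) auto
  thus ?thesis by simp
next
  case False
  assume "0 \<le> t" "t \<le> 1"
  hence "t * L \<le> 0" using False by (intro mult_nonneg_nonpos) auto
  thus ?thesis by simp
qed

lemma pointwise:
  fixes P P1 P2 :: "('a \<times> 'b) pmf"
  assumes mix: "\<And>z. pmf P z = a1 * pmf P1 z + a2 * pmf P2 z"
    and a1: "0 < a1" "a1 \<le> 1" and a2: "0 \<le> a2"
    and w: "(x, y) \<in> set_pmf P1"
  shows "\<bar>Zf n P (x, y)\<bar> \<le> log 2 (1 / a1) + Zf n P1 (x, y)
           + 4 * sqrt (pmf (map_pmf snd P) y / pmf (map_pmf snd P1) y)"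
proof -
  define p where "p = pmf P (x, y)"
  define p1 where "p1 = pmf P1 (x, y)"
  define Y where "Y = pmf (map_pmf snd P) y"
  define Y1 where "Y1 = pmf (map_pmf snd P1) y"
  define R where "R = Y / Y1"
  have p1pos: "0 < p1" unfolding p1_def using w by (rule pmf_positive)
  have pp: "a1 * p1 \<le> p" unfolding p_def p1_def using mix[of "(x, y)"] a2
    by (simp add: mult_nonneg_nonneg)
  have ppos: "0 < p" using pp p1pos a1 by (smt (verit) mult_pos_pos)
  have Yp: "p \<le> Y" unfolding p_def Y_def by (rule pmf_le_marg)
  have Y1p: "p1 \<le> Y1" unfolding p1_def Y1_def by (rule pmf_le_marg)
  have Ypos: "0 < Y" using Yp ppos by simp
  have Y1pos: "0 < Y1" using Y1p p1pos by simp
  have Rpos: "0 < R" unfolding R_def using Ypos Y1pos by simp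
  have cp: "cond_prob P x y = p / Y" unfolding cond_prob_def p_def Y_def ..
  have cp1: "cond_prob P1 x y = p1 / Y1" unfolding cond_prob_def p1_def Y1_def ..
  have key: "1 / cond_prob P x y \<le> (1 / a1) * (1 / cond_prob P1 x y) * R"
  proof -
    have "1 / cond_prob P x y = Y / p" unfolding cp by simp
    also have "\<dots> \<le> Y / (a1 * p1)"
      using pp Ypos a1 p1pos ppos by (intro divide_left_mono) (auto intro!: mult_pos_pos)
    also have "\<dots> = (1 / a1) * (1 / cond_prob P1 x y) * R"
      unfolding cp1 R_def using a1 p1pos Y1pos by (simp add: field_simps)
    finally show ?thesis .
  qed
  have L1: "0 \<le> log 2 (1 / cond_prob P1 x y)"
    using p1pos Y1p unfolding cp1 by simp
  have L: "0 \<le> log 2 (1 / cond_prob P x y)"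
    using ppos Yp unfolding cp by simp
  have pos1: "0 < 1 / cond_prob P1 x y" unfolding cp1 using p1pos Y1pos by simp
  have logb: "log 2 (1 / cond_prob P x y) \<le> log 2 (1 / a1) + log 2 (1 / cond_prob P1 x y) + log 2 R"
  proof -
    have "log 2 (1 / cond_prob P x y) \<le> log 2 ((1 / a1) * (1 / cond_prob P1 x y) * R)"
    proof -
      have pos3: "0 < (1 / a1) * (1 / cond_prob P1 x y) * R" using a1 pos1 Rpos by simp
      have posL: "0 < 1 / cond_prob P x y" unfolding cp using ppos Ypos by simp
      have two: "1 < (2::real)" by simp
      from log_le_cancel_iff[OF two posL pos3] key show ?thesis by blast
    qed
    also have "\<dots> = log 2 (1 / a1) + log 2 (1 / cond_prob P1 x y) + log 2 R"
    proof -
      have A: "0 < 1 / a1" using a1 by simp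
      have AB: "0 < (1 / a1) * (1 / cond_prob P1 x y)" using A pos1 by simp
      have "log 2 ((1 / a1) * (1 / cond_prob P1 x y) * R) = log 2 ((1 / a1) * (1 / cond_prob P1 x y)) + log 2 R"
        using AB Rpos by (intro log_mult_pos) auto
      also have "log 2 ((1 / a1) * (1 / cond_prob P1 x y)) = log 2 (1 / a1) + log 2 (1 / cond_prob P1 x y)"
        using A pos1 by (intro log_mult_pos) auto
      finally show ?thesis .
    qed
    finally show ?thesis .
  qed
  define t where "t = 1 / real n"
  have t0: "0 \<le> t" and t1: "t \<le> 1" unfolding t_def by (auto simp: divide_le_eq)
  have la: "0 \<le> log 2 (1 / a1)" using a1 by simp
  have "\<bar>Zf n P (x, y)\<bar> = t * log 2 (1 / cond_prob P x y)"
    unfolding Zf_def t_def using L by simp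
  also have "\<dots> \<le> t * log 2 (1 / a1) + t * log 2 (1 / cond_prob P1 x y) + t * log 2 R"
    using logb t0 by (metis distrib_left mult_left_mono)
  also have "t * log 2 (1 / a1) \<le> log 2 (1 / a1)"
    using tmax[OF t0 t1, of "log 2 (1 / a1)"] la by simp
  also have "t * log 2 (1 / cond_prob P1 x y) = Zf n P1 (x, y)"
    unfolding Zf_def t_def by simp
  also have "t * log 2 R \<le> 4 * sqrt R"
  proof -
    have "0 \<le> sqrt R" using Rpos by simp
    hence "max 0 (log 2 R) \<le> 4 * sqrt R" using log_sqrt[OF Rpos] by (intro max.boundedI) auto
    thus ?thesis using tmax[OF t0 t1, of "log 2 R"] by (rule order_trans[rotated])
  qed
  finally show ?thesis unfolding R_def Y_def Y1_def by simp
qed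

lemma Rint_lemma:
  fixes QY Q1 :: "'b pmf"
  shows "(\<integral>\<^sup>+y. ennreal (pmf QY y / pmf Q1 y) \<partial>Q1) \<le> 1"
proof -
  have "(\<integral>\<^sup>+y. ennreal (pmf QY y / pmf Q1 y) \<partial>Q1)
      = \<integral>\<^sup>+y. ennreal (pmf Q1 y) * ennreal (pmf QY y / pmf Q1 y) \<partial>count_space UNIV"
    by (rule nn_integral_measure_pmf)
  also have "\<dots> \<le> \<integral>\<^sup>+y. ennreal (pmf QY y) \<partial>count_space UNIV"
  proof (intro nn_integral_mono)
    fix y
    show "ennreal (pmf Q1 y) * ennreal (pmf QY y / pmf Q1 y) \<le> ennreal (pmf QY y)"
    proof (cases "pmf Q1 y = 0")
      case True thus ?thesis by simp
    next
      case False
      hence "pmf Q1 y * (pmf QY y / pmf Q1 y) = pmf QY y" by simp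
      thus ?thesis by (simp add: ennreal_mult[symmetric])
    qed
  qed
  also have "\<dots> = 1" by (simp add: nn_integral_pmf)
  finally show ?thesis .
qed


theorem lemma1:
  fixes P1 P2 P :: "nat \<Rightarrow> ('x::countable list \<times> 'y::countable list) pmf"
    and \<alpha>1 \<alpha>2 :: real
  assumes "correlated_source P1" and "correlated_source P2"
    and "\<alpha>1 > 0" and "\<alpha>2 > 0" and "\<alpha>1 + \<alpha>2 = 1"
    and "\<And>n z. pmf (P n) z = \<alpha>1 * pmf (P1 n) z + \<alpha>2 * pmf (P2 n) z"
    and "condition_W (\<lambda>n. cond_info_density n (P1 n))"
    and "condition_W (\<lambda>n. cond_info_density n (P2 n))"
  shows "condition_W (\<lambda>n. cond_info_density n (P n))"
proof -
  have a1: "0 < \<alpha>1" "\<alpha>1 \<le> 1" and a2: "0 < \<alpha>2" "\<alpha>2 \<le> 1" using assms(3-5) by auto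
  have mix1: "\<And>z. pmf (P n) z = \<alpha>1 * pmf (P1 n) z + \<alpha>2 * pmf (P2 n) z" for n using assms(6) .
  have mix2: "\<And>z. pmf (P n) z = \<alpha>2 * pmf (P2 n) z + \<alpha>1 * pmf (P1 n) z" for n using assms(6) by simp
  define Z where "Z n = Zf n (P n)" for n
  define Z1 where "Z1 n = Zf n (P1 n)" for n
  define Z2 where "Z2 n = Zf n (P2 n)" for n
  define R1 :: "nat \<Rightarrow> 'x list \<times> 'y list \<Rightarrow> real" where "R1 n w = pmf (map_pmf snd (P n)) (snd w) / pmf (map_pmf snd (P1 n)) (snd w)" for n w
  define R2 :: "nat \<Rightarrow> 'x list \<times> 'y list \<Rightarrow> real" where "R2 n w = pmf (map_pmf snd (P n)) (snd w) / pmf (map_pmf snd (P2 n)) (snd w)" for n w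
  define c1 where "c1 = log 2 (1 / \<alpha>1)"
  define c2 where "c2 = log 2 (1 / \<alpha>2)"
  have W1: "condition_W (\<lambda>n. map_pmf (Z1 n) (P1 n))" using assms(7) by (simp add: cid_eq Z1_def)
  have W2: "condition_W (\<lambda>n. map_pmf (Z2 n) (P2 n))" using assms(8) by (simp add: cid_eq Z2_def)
  have Zpos: "\<And>n w. w \<in> set_pmf (P n) \<Longrightarrow> 0 \<le> Z n w"
    unfolding Z_def by (metis Zf_nonneg surj_pair)
  have Zpos1: "\<And>n w. w \<in> set_pmf (P1 n) \<Longrightarrow> 0 \<le> Z1 n w"
    unfolding Z1_def by (metis Zf_nonneg surj_pair)
  have Zpos2: "\<And>n w. w \<in> set_pmf (P2 n) \<Longrightarrow> 0 \<le> Z2 n w"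
    unfolding Z2_def by (metis Zf_nonneg surj_pair)
  have Fb1: "\<And>n w. w \<in> set_pmf (P1 n) \<Longrightarrow> \<bar>Z n w\<bar> \<le> c1 + Z1 n w + 4 * sqrt (R1 n w)"
  proof -
    fix n w assume w: "w \<in> set_pmf (P1 n)"
    obtain x y where xy: "w = (x, y)" by (cases w)
    show "\<bar>Z n w\<bar> \<le> c1 + Z1 n w + 4 * sqrt (R1 n w)"
      using pointwise[OF mix1 a1 less_imp_le[OF a2(1)], where x=x and y=y and n=n] w
      unfolding xy Z_def Z1_def R1_def c1_def by simp
  qed
  have Fb2: "\<And>n w. w \<in> set_pmf (P2 n) \<Longrightarrow> \<bar>Z n w\<bar> \<le> c2 + Z2 n w + 4 * sqrt (R2 n w)"
  proof -
    fix n w assume w: "w \<in> set_pmf (P2 n)"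
    obtain x y where xy: "w = (x, y)" by (cases w)
    show "\<bar>Z n w\<bar> \<le> c2 + Z2 n w + 4 * sqrt (R2 n w)"
      using pointwise[OF mix2 a2 less_imp_le[OF a1(1)], where x=x and y=y and n=n] w
      unfolding xy Z_def Z2_def R2_def c2_def by simp
  qed
  have Rpos1: "\<And>n w. 0 \<le> R1 n w" unfolding R1_def by simp
  have Rpos2: "\<And>n w. 0 \<le> R2 n w" unfolding R2_def by simp
  have Rint1: "(\<integral>\<^sup>+w. ennreal (R1 n w) \<partial>P1 n) \<le> 1" for n
    using Rint_lemma[of "map_pmf snd (P1 n)" "map_pmf snd (P n)"] unfolding R1_def by simp
  have Rint2: "(\<integral>\<^sup>+w. ennreal (R2 n w) \<partial>P2 n) \<le> 1" for n
    using Rint_lemma[of "map_pmf snd (P2 n)" "map_pmf snd (P n)"] unfolding R2_def by simp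
  have c1: "0 \<le> c1" unfolding c1_def using a1 by simp
  have c2: "0 \<le> c2" unfolding c2_def using a2 by simp
  obtain Ma where Ma: "\<forall>n\<ge>1. (\<integral>\<^sup>+w. ennreal \<bar>Z n w\<bar> \<partial>P1 n) \<le> ennreal Ma"
    using comp_bound[where F="\<lambda>n w. \<bar>Z n w\<bar>", OF W1 Zpos1 Fb1 Rpos1 Rint1 c1] by blast
  obtain Mb where Mb: "\<forall>n\<ge>1. (\<integral>\<^sup>+w. ennreal \<bar>Z n w\<bar> \<partial>P2 n) \<le> ennreal Mb"
    using comp_bound[where F="\<lambda>n w. \<bar>Z n w\<bar>", OF W2 Zpos2 Fb2 Rpos2 Rint2 c2] by blast
  define Mt where "Mt = \<alpha>1 * max Ma 0 + \<alpha>2 * max Mb 0"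
  have Mt0: "0 \<le> Mt" unfolding Mt_def using a1 a2 by simp
  have tot: "(\<integral>\<^sup>+w. ennreal \<bar>Z n w\<bar> \<partial>P n) \<le> ennreal Mt" if n: "n \<ge> 1" for n
  proof -
    have "(\<integral>\<^sup>+w. ennreal \<bar>Z n w\<bar> \<partial>P n) = ennreal \<alpha>1 * (\<integral>\<^sup>+w. ennreal \<bar>Z n w\<bar> \<partial>P1 n)
          + ennreal \<alpha>2 * (\<integral>\<^sup>+w. ennreal \<bar>Z n w\<bar> \<partial>P2 n)"
      by (rule mix_nn[OF mix1]) (use a1 a2 in auto)
    also have "\<dots> \<le> ennreal \<alpha>1 * ennreal (max Ma 0) + ennreal \<alpha>2 * ennreal (max Mb 0)"
    proof -
      have i1: "(\<integral>\<^sup>+w. ennreal \<bar>Z n w\<bar> \<partial>P1 n) \<le> ennreal (max Ma 0)"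
        using Ma n by (rule_tac order_trans[OF _ ennreal_leI]) auto
      have i2: "(\<integral>\<^sup>+w. ennreal \<bar>Z n w\<bar> \<partial>P2 n) \<le> ennreal (max Mb 0)"
        using Mb n by (rule_tac order_trans[OF _ ennreal_leI]) auto
      show ?thesis using i1 i2 by (intro add_mono mult_left_mono) auto
    qed
    also have "\<dots> = ennreal Mt" unfolding Mt_def using a1 a2
      by (simp add: ennreal_plus ennreal_mult)
    finally show ?thesis .
  qed
  have goal: "condition_W (\<lambda>n. map_pmf (Z n) (P n))"
    unfolding condition_W_def
  proof (intro conjI allI impI)
    show "\<exists>M. \<forall>n\<ge>1. integrable (measure_pmf (map_pmf (Z n) (P n))) (\<lambda>z. z) \<and>
                 measure_pmf.expectation (map_pmf (Z n) (P n)) (\<lambda>z. z) < M"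
    proof (intro exI[of _ "Mt + 1"] allI impI)
      fix n :: nat assume n: "n \<ge> 1"
      have fin: "(\<integral>\<^sup>+w. ennreal (norm (Z n w)) \<partial>P n) < \<infinity>"
        using tot[OF n] by (simp add: le_less_trans)
      have int: "integrable (P n) (Z n)" by (rule integrableI_bounded) (use fin in auto)
      have "ennreal (integral\<^sup>L (P n) (Z n)) = (\<integral>\<^sup>+w. ennreal (Z n w) \<partial>P n)"
        using int Zpos by (intro nn_integral_eq_integral[symmetric]) (auto intro!: AE_pmfI)
      also have "\<dots> = (\<integral>\<^sup>+w. ennreal \<bar>Z n w\<bar> \<partial>P n)"
        using Zpos by (intro nn_integral_cong_AE AE_pmfI) auto
      also have "\<dots> \<le> ennreal Mt" by (rule tot[OF n])
      finally have "integral\<^sup>L (P n) (Z n) \<le> Mt" using Mt0 by (simp add: ennreal_le_iff)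
      thus "integrable (measure_pmf (map_pmf (Z n) (P n))) (\<lambda>z. z) \<and>
                 measure_pmf.expectation (map_pmf (Z n) (P n)) (\<lambda>z. z) < Mt + 1"
        using int by simp
    qed
  next
    fix A :: "nat \<Rightarrow> real set"
    assume lim: "(\<lambda>n. measure_pmf.prob (map_pmf (Z n) (P n)) (A n)) \<longlonglongrightarrow> 0"
    define E where "E n = Z n -` A n" for n
    have pE: "(\<lambda>n. measure (P n) (E n)) \<longlonglongrightarrow> 0" using lim unfolding E_def by simp
    have pE1: "(\<lambda>n. measure (P1 n) (E n)) \<longlonglongrightarrow> 0"
    proof (rule tendsto_sandwich[of "\<lambda>_. 0" _ _ "\<lambda>n. measure (P n) (E n) / \<alpha>1"])
      show "\<forall>\<^sub>F n in sequentially. measure (P1 n) (E n) \<le> measure (P n) (E n) / \<alpha>1"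
      proof (intro always_eventually allI)
        fix n
        have "measure (P n) (E n) = \<alpha>1 * measure (P1 n) (E n) + \<alpha>2 * measure (P2 n) (E n)"
          by (rule mix_measure[OF mix1]) (use a1 a2 in auto)
        moreover have "0 \<le> \<alpha>2 * measure (P2 n) (E n)" using a2 by simp
        ultimately have "\<alpha>1 * measure (P1 n) (E n) \<le> measure (P n) (E n)" by linarith
        thus "measure (P1 n) (E n) \<le> measure (P n) (E n) / \<alpha>1" using a1 by (simp add: le_divide_eq mult.commute)
      qed
      show "(\<lambda>n. measure (P n) (E n) / \<alpha>1) \<longlonglongrightarrow> 0" using pE by (rule tendsto_divide_zero)
    qed auto
    have pE2: "(\<lambda>n. measure (P2 n) (E n)) \<longlonglongrightarrow> 0"
    proof (rule tendsto_sandwich[of "\<lambda>_. 0" _ _ "\<lambda>n. measure (P n) (E n) / \<alpha>2"])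
      show "\<forall>\<^sub>F n in sequentially. measure (P2 n) (E n) \<le> measure (P n) (E n) / \<alpha>2"
      proof (intro always_eventually allI)
        fix n
        have "measure (P n) (E n) = \<alpha>1 * measure (P1 n) (E n) + \<alpha>2 * measure (P2 n) (E n)"
          by (rule mix_measure[OF mix1]) (use a1 a2 in auto)
        moreover have "0 \<le> \<alpha>1 * measure (P1 n) (E n)" using a1 by simp
        ultimately have "\<alpha>2 * measure (P2 n) (E n) \<le> measure (P n) (E n)" by linarith
        thus "measure (P2 n) (E n) \<le> measure (P n) (E n) / \<alpha>2" using a2 by (simp add: le_divide_eq mult.commute)
      qed
      show "(\<lambda>n. measure (P n) (E n) / \<alpha>2) \<longlonglongrightarrow> 0" using pE by (rule tendsto_divide_zero)
    qed auto
    have T1: "(\<lambda>n. \<integral>\<^sup>+w. ennreal \<bar>Z n w\<bar> * indicator (E n) w \<partial>P1 n) \<longlonglongrightarrow> 0"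
      by (rule comp_ui[where F="\<lambda>n w. \<bar>Z n w\<bar>", OF W1 Zpos1 Fb1 Rpos1 Rint1 c1 pE1])
    have T2: "(\<lambda>n. \<integral>\<^sup>+w. ennreal \<bar>Z n w\<bar> * indicator (E n) w \<partial>P2 n) \<longlonglongrightarrow> 0"
      by (rule comp_ui[where F="\<lambda>n w. \<bar>Z n w\<bar>", OF W2 Zpos2 Fb2 Rpos2 Rint2 c2 pE2])
    have eq: "(\<integral>\<^sup>+ z \<in> A n. ennreal \<bar>z\<bar> \<partial>measure_pmf (map_pmf (Z n) (P n)))
       = ennreal \<alpha>1 * (\<integral>\<^sup>+w. ennreal \<bar>Z n w\<bar> * indicator (E n) w \<partial>P1 n)
         + ennreal \<alpha>2 * (\<integral>\<^sup>+w. ennreal \<bar>Z n w\<bar> * indicator (E n) w \<partial>P2 n)" for n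
    proof -
      have "(\<integral>\<^sup>+ z \<in> A n. ennreal \<bar>z\<bar> \<partial>measure_pmf (map_pmf (Z n) (P n)))
         = (\<integral>\<^sup>+w. ennreal \<bar>Z n w\<bar> * indicator (E n) w \<partial>P n)"
        unfolding E_def by (simp add: indicator_vimage)
      also have "\<dots> = ennreal \<alpha>1 * (\<integral>\<^sup>+w. ennreal \<bar>Z n w\<bar> * indicator (E n) w \<partial>P1 n)
         + ennreal \<alpha>2 * (\<integral>\<^sup>+w. ennreal \<bar>Z n w\<bar> * indicator (E n) w \<partial>P2 n)"
        by (rule mix_nn[OF mix1]) (use a1 a2 in auto)
      finally show ?thesis .
    qed
    have "(\<lambda>n. ennreal \<alpha>1 * (\<integral>\<^sup>+w. ennreal \<bar>Z n w\<bar> * indicator (E n) w \<partial>P1 n)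
         + ennreal \<alpha>2 * (\<integral>\<^sup>+w. ennreal \<bar>Z n w\<bar> * indicator (E n) w \<partial>P2 n))
         \<longlonglongrightarrow> ennreal \<alpha>1 * 0 + ennreal \<alpha>2 * 0"
      by (intro tendsto_add ennreal_tendsto_cmult T1 T2) auto
    thus "(\<lambda>n. \<integral>\<^sup>+ z \<in> A n. ennreal \<bar>z\<bar> \<partial>measure_pmf (map_pmf (Z n) (P n))) \<longlonglongrightarrow> 0"
      unfolding eq by simp
  qed
  show ?thesis using goal by (simp add: cid_eq Z_def)
qed

end
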